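(* Let $\mathcal{H}$ be a complex Hilbert space and let $A\in\mathcal{B}(\mathcal{H})$ be invertible. For a unit vector $x$ put \[ \xi(x)=\frac{\left|\langle A^2x,x\rangle-\langle Ax,x\rangle^2\right|}{\|A^*x\|}. \] Then \[ \inf_{\|x\|=1}\xi^2(x)+\omega^2(A)\le \|A\|^2 . \]
   Context: $\mathcal{B}(\mathcal{H})$ denotes the algebra of bounded linear operators on $\mathcal{H}$; $\omega(A)=\sup_{\|x\|=1}|\langle Ax,x\rangle|$ is the numerical radius and $\|\cdot\|$ the operator norm. *)

theory Defs
  imports "HOL-Analysis.Analysis"
begin

text \<open>We model a complex
  Hilbert space as a real Banach space (type class real_normed_vector + complete_space)
  equipped with a complex structure J (multiplication by the imaginary unit) and a
  complex inner product ip inducing the norm.\<close>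

definition scaleJ :: "('a::real_vector \<Rightarrow> 'a) \<Rightarrow> complex \<Rightarrow> 'a \<Rightarrow> 'a" where
  "scaleJ J c x = Re c *\<^sub>R x + Im c *\<^sub>R J x"

definition complex_structure :: "('a::real_normed_vector \<Rightarrow> 'a) \<Rightarrow> bool" where
  "complex_structure J \<longleftrightarrow> linear J \<and> (\<forall>x. J (J x) = - x)"

definition complex_inner_on :: "('a::real_normed_vector \<Rightarrow> 'a) \<Rightarrow> ('a \<Rightarrow> 'a \<Rightarrow> complex) \<Rightarrow> bool" where
  "complex_inner_on J ip \<longleftrightarrow>
     (\<forall>x y. ip x y = cnj (ip y x)) \<and>
     (\<forall>x y z. ip (x + y) z = ip x z + ip y z) \<and>
     (\<forall>c x y. ip (scaleJ J c x) y = c * ip x y) \<and>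
     (\<forall>x. 0 \<le> Re (ip x x) \<and> norm x = sqrt (Re (ip x x)))"

definition bounded_clinear_J :: "('a::real_normed_vector \<Rightarrow> 'a) \<Rightarrow> ('a \<Rightarrow> 'a) \<Rightarrow> bool" where
  "bounded_clinear_J J A \<longleftrightarrow> bounded_linear A \<and> (\<forall>x. A (J x) = J (A x))"

definition is_adjoint :: "('a \<Rightarrow> 'a \<Rightarrow> complex) \<Rightarrow> ('a \<Rightarrow> 'a) \<Rightarrow> ('a \<Rightarrow> 'a) \<Rightarrow> bool" where
  "is_adjoint ip A B \<longleftrightarrow> (\<forall>x y. ip (A x) y = ip x (B y))"

definition invertible_bop :: "('a::real_normed_vector \<Rightarrow> 'a) \<Rightarrow> ('a \<Rightarrow> 'a) \<Rightarrow> bool" where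
  "invertible_bop J A \<longleftrightarrow> bounded_clinear_J J A \<and>
     (\<exists>B. bounded_clinear_J J B \<and> A \<circ> B = id \<and> B \<circ> A = id)"

definition numrad :: "('a::real_normed_vector \<Rightarrow> 'a \<Rightarrow> complex) \<Rightarrow> ('a \<Rightarrow> 'a) \<Rightarrow> real" where
  "numrad ip A = (SUP x\<in>{x. norm x = 1}. cmod (ip (A x) x))"

definition xi :: "('a::real_normed_vector \<Rightarrow> 'a \<Rightarrow> complex) \<Rightarrow> ('a \<Rightarrow> 'a) \<Rightarrow> ('a \<Rightarrow> 'a) \<Rightarrow> 'a \<Rightarrow> real" where
  "xi ip A Astar x = cmod (ip (A (A x)) x - (ip (A x) x)\<^sup>2) / norm (Astar x)"

end

theory Submission
  imports Defs
begin

lemma ip_cnj: "complex_inner_on J ip \<Longrightarrow> ip x y = cnj (ip y x)"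
  unfolding complex_inner_on_def by blast
lemma ip_add: "complex_inner_on J ip \<Longrightarrow> ip (x + y) z = ip x z + ip y z"
  unfolding complex_inner_on_def by blast
lemma ip_scale: "complex_inner_on J ip \<Longrightarrow> ip (scaleJ J c x) y = c * ip x y"
  unfolding complex_inner_on_def by blast
lemma ip_norm: "complex_inner_on J ip \<Longrightarrow> norm x = sqrt (Re (ip x x)) \<and> 0 \<le> Re (ip x x)"
  unfolding complex_inner_on_def by blast

lemma ip_add_right: "complex_inner_on J ip \<Longrightarrow> ip x (y + z) = ip x y + ip x z"
  by (subst ip_cnj, assumption, simp add: ip_add, subst (1 2) ip_cnj, assumption+, simp)
lemma ip_scale_right: "complex_inner_on J ip \<Longrightarrow> ip x (scaleJ J c y) = cnj c * ip x y"
  by (subst ip_cnj, assumption, simp add: ip_scale, subst ip_cnj, assumption, simp)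
lemma scaleJ_m1: "scaleJ J (-1) x = - x"
  by (simp add: scaleJ_def)
lemma ip_minus: "complex_inner_on J ip \<Longrightarrow> ip (- x) y = - ip x y"
  using ip_scale[of J ip "-1" x y] by (simp add: scaleJ_m1)
lemma ip_minus_right: "complex_inner_on J ip \<Longrightarrow> ip x (- y) = - ip x y"
  by (subst ip_cnj, assumption, simp add: ip_minus, subst ip_cnj, assumption, simp)
lemma ip_diff: "complex_inner_on J ip \<Longrightarrow> ip (x - y) z = ip x z - ip y z"
  using ip_add[of J ip x "-y" z] ip_minus[of J ip y z] by simp
lemma ip_diff_right: "complex_inner_on J ip \<Longrightarrow> ip x (y - z) = ip x y - ip x z"
  using ip_add_right[of J ip x y "-z"] ip_minus_right[of J ip x z] by simp

lemma ip_self: "complex_inner_on J ip \<Longrightarrow> ip x x = complex_of_real ((norm x)\<^sup>2)"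
proof -
  assume h: "complex_inner_on J ip"
  have "Im (ip x x) = 0" using ip_cnj[OF h, of x x] by (metis cnj.sel(2) neg_equal_zero)
  moreover have "Re (ip x x) = (norm x)\<^sup>2" using ip_norm[OF h, of x] by simp
  ultimately show ?thesis by (simp add: complex_eq_iff)
qed

lemma ip_zero: "complex_inner_on J ip \<Longrightarrow> ip 0 y = 0"
  using ip_add[of J ip 0 0 y] by simp
lemma ip_zero_right: "complex_inner_on J ip \<Longrightarrow> ip y 0 = 0"
  using ip_cnj[of J ip y 0] ip_zero[of J ip y] by simp


lemma ip_CS:
  assumes h: "complex_inner_on J ip"
  shows "cmod (ip u v) \<le> norm u * norm v"
proof (cases "v = 0")
  case True then show ?thesis by (simp add: ip_zero_right[OF h])
next
  case False
  define t where "t = ip u v / ip v v"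
  define w where "w = u - scaleJ J t v"
  have vv: "ip v v = complex_of_real ((norm v)\<^sup>2)" by (rule ip_self[OF h])
  have nv: "(norm v)\<^sup>2 > 0" using False by simp
  have wv: "ip w v = 0" unfolding w_def t_def
    using nv by (simp add: ip_diff[OF h] ip_scale[OF h] vv)
  have "ip w w = ip w u - cnj t * ip w v" unfolding w_def
    by (simp add: ip_diff_right[OF h] ip_scale_right[OF h]) 
  also have "\<dots> = ip w u" using wv by simp
  also have "\<dots> = ip u u - t * ip v u" unfolding w_def by (simp add: ip_diff[OF h] ip_scale[OF h])
  also have "\<dots> = ip u u - ip u v * cnj (ip u v) / ip v v" 
    unfolding t_def ip_cnj[OF h, of v u] by simp
  also have "\<dots> = complex_of_real ((norm u)\<^sup>2 - (cmod (ip u v))\<^sup>2 / (norm v)\<^sup>2)"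
    unfolding vv ip_self[OF h, of u] complex_norm_square[symmetric] by simp
  finally have "complex_of_real ((norm w)\<^sup>2) = complex_of_real ((norm u)\<^sup>2 - (cmod (ip u v))\<^sup>2 / (norm v)\<^sup>2)"
    using ip_self[OF h, of w] by simp
  hence "(norm w)\<^sup>2 = (norm u)\<^sup>2 - (cmod (ip u v))\<^sup>2 / (norm v)\<^sup>2" 
    using of_real_eq_iff by blast
  hence "0 \<le> (norm u)\<^sup>2 - (cmod (ip u v))\<^sup>2 / (norm v)\<^sup>2" by (metis zero_le_power2)
  hence "(cmod (ip u v))\<^sup>2 / (norm v)\<^sup>2 \<le> (norm u)\<^sup>2" by simp
  hence "(cmod (ip u v))\<^sup>2 \<le> (norm u)\<^sup>2 * (norm v)\<^sup>2" using nv by (simp add: divide_le_eq)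
  hence "(cmod (ip u v))\<^sup>2 \<le> (norm u * norm v)\<^sup>2" by (simp add: power_mult_distrib)
  thus ?thesis by (rule power2_le_imp_le) simp
qed


lemma pointwise:
  assumes h: "complex_inner_on J ip" and bl: "bounded_linear A"
    and adj: "is_adjoint ip A Astar" and nx: "norm x = 1"
  shows "(xi ip A Astar x)\<^sup>2 + (cmod (ip (A x) x))\<^sup>2 \<le> (onorm A)\<^sup>2"
proof -
  define l where "l = ip (A x) x"
  define y where "y = Astar x"
  define z where "z = A x - scaleJ J l x"
  have adj': "\<And>a b. ip (A a) b = ip a (Astar b)" using adj unfolding is_adjoint_def by blast
  have xx: "ip x x = 1" using ip_self[OF h, of x] nx by simp
  have xy: "ip x y = l" unfolding y_def l_def by (simp add: adj')
  have e1: "ip (A (A x)) x - l\<^sup>2 = ip z y"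
    unfolding z_def apply (simp add: ip_diff[OF h] ip_scale[OF h] xy adj' y_def power2_eq_square)
    using xy y_def by simp
  have zx: "ip z x = 0" unfolding z_def by (simp add: ip_diff[OF h] ip_scale[OF h] xx l_def)
  have xz: "ip x z = 0" using ip_cnj[OF h, of x z] zx by simp
  have "ip z z = ip (A x) z - l * ip x z" unfolding z_def
    by (simp add: ip_diff[OF h] ip_scale[OF h])
  also have "\<dots> = ip (A x) z" using xz by simp
  also have "\<dots> = ip (A x) (A x) - cnj l * l" unfolding z_def
    by (simp add: ip_diff_right[OF h] ip_scale_right[OF h] l_def)
  also have "\<dots> = complex_of_real ((norm (A x))\<^sup>2 - (cmod l)\<^sup>2)"
    unfolding ip_self[OF h, of "A x"] using complex_norm_square[of l] by (simp add: mult.commute)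
  finally have "complex_of_real ((norm z)\<^sup>2) = complex_of_real ((norm (A x))\<^sup>2 - (cmod l)\<^sup>2)"
    using ip_self[OF h, of z] by simp
  hence nz: "(norm z)\<^sup>2 = (norm (A x))\<^sup>2 - (cmod l)\<^sup>2" using of_real_eq_iff by blast
  have xib: "xi ip A Astar x \<le> norm z"
  proof (cases "norm y = 0")
    case True then show ?thesis unfolding xi_def y_def by simp
  next
    case False
    hence "cmod (ip z y) / norm y \<le> norm z" using ip_CS[OF h, of z y]
      by (simp add: divide_le_eq)
    thus ?thesis unfolding xi_def y_def using e1 l_def y_def by simp
  qed
  have xi0: "0 \<le> xi ip A Astar x" unfolding xi_def by simp
  have "(xi ip A Astar x)\<^sup>2 \<le> (norm z)\<^sup>2" using xib xi0 by (simp add: power_mono)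
  moreover have "norm (A x) \<le> onorm A" using onorm[OF bl, of x] nx by simp
  hence "(norm (A x))\<^sup>2 \<le> (onorm A)\<^sup>2" by (simp add: power_mono)
  ultimately show ?thesis using nz l_def by simp
qed

theorem theorem3p5:
  fixes J :: "'a::{real_normed_vector, complete_space} \<Rightarrow> 'a"
    and ip :: "'a \<Rightarrow> 'a \<Rightarrow> complex"
    and A Astar :: "'a \<Rightarrow> 'a"
  assumes "complex_structure J"
    and "complex_inner_on J ip"
    and "\<exists>x::'a. x \<noteq> 0"
    and "invertible_bop J A"
    and "is_adjoint ip A Astar"
  shows "(INF x\<in>{x. norm x = 1}. (xi ip A Astar x)\<^sup>2) + (numrad ip A)\<^sup>2 \<le> (onorm A)\<^sup>2"
proof -
  note h = assms(2)
  have bl: "bounded_linear A" using assms(4) unfolding invertible_bop_def bounded_clinear_J_def by blast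
  define S where "S = {x::'a. norm x = 1}"
  define I where "I = (INF x\<in>S. (xi ip A Astar x)\<^sup>2)"
  define g where "g = (\<lambda>x. cmod (ip (A x) x))"
  obtain x0 :: 'a where "x0 \<noteq> 0" using assms(3) by blast
  hence x0S: "scaleR (1 / norm x0) x0 \<in> S" unfolding S_def by simp
  hence Sne: "S \<noteq> {}" by blast
  have pw: "\<And>x. x \<in> S \<Longrightarrow> (xi ip A Astar x)\<^sup>2 + (g x)\<^sup>2 \<le> (onorm A)\<^sup>2"
    unfolding S_def g_def using pointwise[OF h bl assms(5)] by blast
  have bb: "bdd_below ((\<lambda>x. (xi ip A Astar x)\<^sup>2) ` S)" by (rule bdd_belowI2[of _ 0]) simp
  have Ile: "\<And>x. x \<in> S \<Longrightarrow> I \<le> (xi ip A Astar x)\<^sup>2" unfolding I_def using bb by (rule cINF_lower2) auto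
  have gle: "\<And>x. x \<in> S \<Longrightarrow> (g x)\<^sup>2 \<le> (onorm A)\<^sup>2 - I" using pw Ile by fastforce
  have K0: "0 \<le> (onorm A)\<^sup>2 - I" using gle[OF x0S] by (meson order_trans zero_le_power2)
  have gs: "\<And>x. x \<in> S \<Longrightarrow> g x \<le> sqrt ((onorm A)\<^sup>2 - I)"
    using gle by (metis g_def norm_ge_zero real_le_rsqrt)
  have num: "numrad ip A = (SUP x\<in>S. g x)" unfolding numrad_def S_def g_def by simp
  have ba: "bdd_above (g ` S)" by (rule bdd_aboveI2, erule gs)
  have n0: "0 \<le> numrad ip A" unfolding num
    using cSUP_upper[OF x0S ba] by (smt (verit) g_def norm_ge_zero)
  have "numrad ip A \<le> sqrt ((onorm A)\<^sup>2 - I)" unfolding num using Sne gs by (rule cSUP_least)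
  hence "(numrad ip A)\<^sup>2 \<le> (onorm A)\<^sup>2 - I" using n0 K0 by (metis real_sqrt_le_iff real_sqrt_unique sqrt_le_D)
  thus ?thesis unfolding I_def S_def by simp
qed
end
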